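(* Fix parameters $m_1,m_2,\alpha>0$. For every $(N_1^a,N_1^A,N_2^a,N_2^A)\in(0,\infty)^4$, all eigenvalues of the matrix $J_{S_L}$ have strictly negative real part.
   Context: For $(N_1^a,N_1^A,N_2^a,N_2^A)\in(0,\infty)^4$ set $p_i=\frac{N_i^A}{N_i^A+N_i^a}$, $q_i=1-p_i=\frac{N_i^a}{N_i^A+N_i^a}$ for $i=1,2$, and $R^A=\frac{\alpha m_2N_2^A}{N_1^A}$, $S^A=\frac{m_1N_1^A}{\alpha N_2^A}$, $R^a=\frac{\alpha m_2N_2^a}{N_1^a}$, $S^a=\frac{m_1N_1^a}{\alpha N_2^a}$. The $3\times3$ matrix $J_{S_L}$ is $$J_{S_L}=\begin{pmatrix}-\frac12 & \frac12(R^A-S^A) & -\frac12(R^a-S^a)\\[2pt] \frac{q_1-q_2}{2} & -(R^A+S^A)-\frac{q_1+q_2}{4} & \frac{q_1+q_2}{4}\\[2pt] \frac{p_2-p_1}{2} & \frac{p_1+p_2}{4} & -(R^a+S^a)-\frac{p_1+p_2}{4}\end{pmatrix}.$$ *)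

theory Defs
  imports Complex_Main "Jordan_Normal_Form.Char_Poly"
begin

definition JSL :: "real \<Rightarrow> real \<Rightarrow> real \<Rightarrow> real \<Rightarrow> real \<Rightarrow> real \<Rightarrow> real \<Rightarrow> real mat" where
  "JSL m1 m2 \<alpha> N1a N1A N2a N2A =
    (let p1 = N1A / (N1A + N1a); q1 = N1a / (N1A + N1a);
         p2 = N2A / (N2A + N2a); q2 = N2a / (N2A + N2a);
         RA = \<alpha> * m2 * N2A / N1A; SA = m1 * N1A / (\<alpha> * N2A);
         Ra = \<alpha> * m2 * N2a / N1a; Sa = m1 * N1a / (\<alpha> * N2a)
     in mat_of_rows_list 3
       [[-1/2, (RA - SA)/2, -(Ra - Sa)/2],
        [(q1 - q2)/2, -(RA + SA) - (q1 + q2)/4, (q1 + q2)/4],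
        [(p2 - p1)/2, (p1 + p2)/4, -(Ra + Sa) - (p1 + p2)/4]])"

end

theory Submission
  imports Defs
begin

lemma cubic_hurwitz:
  fixes z :: complex and a2 a1 a0 :: real
  assumes eq: "z^3 + of_real a2 * z^2 + of_real a1 * z + of_real a0 = 0"
    and h2: "a2 > 0" and h0: "a0 > 0" and h1: "a2 * a1 > a0"
  shows "Re z < 0"
proof (rule ccontr)
  assume "\<not> Re z < 0"
  hence x0: "Re z \<ge> 0" by simp
  obtain x y where z: "z = Complex x y" by (metis complex.exhaust)
  have x0': "x \<ge> 0" using x0 z by simp
  have a1p: "a1 > 0"
  proof (rule ccontr)
    assume "\<not> a1 > 0" hence "a2 * a1 \<le> 0" using h2 by (simp add: mult_nonneg_nonpos)
    thus False using h1 h0 by linarith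
  qed
  have e: "z*z*z + of_real a2 * (z*z) + of_real a1 * z + of_real a0 = 0"
    using eq by (simp add: power2_eq_square power3_eq_cube)
  have re: "x*x*x - 3*x*y*y + a2*(x*x - y*y) + a1*x + a0 = 0"
    using arg_cong[OF e, of Re] z by (simp add: algebra_simps)
  have im: "y * (3*x*x - y*y + 2*a2*x + a1) = 0"
    using arg_cong[OF e, of Im] z by (simp add: algebra_simps)
  show False
  proof (cases "y = 0")
    case True
    have "x*x*x \<ge> 0" "a2*(x*x) \<ge> 0" "a1*x \<ge> 0" using x0' h2 a1p by auto
    thus False using re True h0 by simp
  next
    case False
    hence yy: "y*y = 3*x*x + 2*a2*x + a1" using im by simp
    have "x*x*x - 3*x*(y*y) + a2*(x*x) - a2*(y*y) + a1*x + a0 = 0" using re by (simp add: algebra_simps)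
    hence "-8*(x*x*x) - 8*a2*(x*x) - 2*(a1 + a2*a2)*x + (a0 - a1*a2) = 0"
      unfolding yy by (simp add: algebra_simps)
    moreover have "x*x*x \<ge> 0" "a2*(x*x) \<ge> 0" "(a1 + a2*a2)*x \<ge> 0" using x0' h2 a1p by auto
    ultimately show False using h1 by (simp add: algebra_simps)
  qed
qed

lemma det3: fixes A :: "'a::comm_ring_1 mat" assumes A: "A \<in> carrier_mat 3 3"
  shows "det A = A$$(0,0) * (A$$(1,1)*A$$(2,2) - A$$(1,2)*A$$(2,1))
     - A$$(0,1) * (A$$(1,0)*A$$(2,2) - A$$(1,2)*A$$(2,0))
     + A$$(0,2) * (A$$(1,0)*A$$(2,1) - A$$(1,1)*A$$(2,0))" (is "_ = ?rhs")
proof -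
  have d2: "det B = B$$(0,0)*B$$(1,1) - B$$(0,1)*B$$(1,0)" if B: "B \<in> carrier_mat 2 2" for B :: "'a mat"
  proof -
    have "det B = (\<Sum>j<2. B $$ (0,j) * cofactor B 0 j)" by (rule laplace_expansion_row[OF B]) simp
    also have "\<dots> = B$$(0,0)*B$$(1,1) - B$$(0,1)*B$$(1,0)"
      using B by (simp add: cofactor_def numeral_2_eq_2 det_single mat_delete_def lessThan_Suc)
    finally show ?thesis .
  qed
  have "det A = (\<Sum>j<3. A $$ (0,j) * cofactor A 0 j)" by (rule laplace_expansion_row[OF A]) simp
  also have "\<dots> = A$$(0,0) * cofactor A 0 0 + A$$(0,1) * cofactor A 0 1 + A$$(0,2) * cofactor A 0 2"
    by (simp add: numeral_3_eq_3 lessThan_Suc numeral_2_eq_2 add.commute add.left_commute)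
  also have "\<dots> = ?rhs"
    using A by (simp add: cofactor_def d2 mat_delete_def numeral_2_eq_2 numeral_3_eq_3 algebra_simps)
  finally show ?thesis .
qed

lemma hurwitz_ineqs:
  fixes x y u w q1 q2 :: real
  assumes x: "x > 0" and y: "y > 0" and u1: "u < x" and u2: "-x < u" and w1: "w < y" and w2: "-y < w"
    and q1: "0 < q1" "q1 < 1" and q2: "0 < q2" "q2 < 1"
  defines "s \<equiv> (q1+q2)/4" and "t \<equiv> (2-q1-q2)/4" and "d \<equiv> (q1-q2)/2"
  defines "a0 \<equiv> (x*y+x*t+y*s)/2 + d/2*(w*(x+1/2) - u*(y+1/2))"
    and "a1 \<equiv> (x+y+1/2)/2 + x*y+x*t+y*s + d/2*(w-u)"
  shows "a0 > 0" "(x+y+1)*a1 > a0"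
proof -
  have dl: "\<bar>d\<bar> < 1/2" using q1 q2 unfolding d_def by auto
  have wb: "\<bar>w\<bar> \<le> y" and ub: "\<bar>u\<bar> \<le> x" using u1 u2 w1 w2 by auto
  have k1: "\<bar>d*(w*(x+1/2) - u*(y+1/2))\<bar> \<le> \<bar>d\<bar>*(y*(x+1/2) + x*(y+1/2))"
  proof -
    have "\<bar>w*(x+1/2) - u*(y+1/2)\<bar> \<le> \<bar>w\<bar>*(x+1/2) + \<bar>u\<bar>*(y+1/2)"
      using x y by (simp add: abs_mult abs_triangle_ineq4 order_trans[OF abs_triangle_ineq4])
    also have "\<dots> \<le> y*(x+1/2) + x*(y+1/2)"
      using wb ub x y by (intro add_mono mult_right_mono) auto
    finally show ?thesis by (simp add: abs_mult mult_left_mono)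
  qed
  have pos1: "x*y*(1-2*\<bar>d\<bar>) > 0" using x y dl by simp
  have pos2: "x*(t-\<bar>d\<bar>/2) > 0" using x q1 q2 unfolding t_def d_def by (intro mult_pos_pos) (auto simp: abs_if field_simps)
  have pos3: "y*(s-\<bar>d\<bar>/2) > 0" using y q1 q2 unfolding s_def d_def by (intro mult_pos_pos) (auto simp: abs_if field_simps)
  have f0: "d*(w*(x+1/2) - u*(y+1/2)) \<ge> - (\<bar>d\<bar>*(y*(x+1/2) + x*(y+1/2)))" using k1 by linarith
  have f1: "2*a0 = x*y+x*t+y*s + d*(w*(x+1/2) - u*(y+1/2))" unfolding a0_def by (simp add: algebra_simps)
  have f2: "\<bar>d\<bar>*(y*(x+1/2) + x*(y+1/2)) = x*y*(2*\<bar>d\<bar>) + x*(\<bar>d\<bar>/2) + y*(\<bar>d\<bar>/2)" by (simp add: algebra_simps)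
  have f3: "x*y*(1-2*\<bar>d\<bar>) = x*y - x*y*(2*\<bar>d\<bar>)" "x*(t-\<bar>d\<bar>/2) = x*t - x*(\<bar>d\<bar>/2)" "y*(s-\<bar>d\<bar>/2) = y*s - y*(\<bar>d\<bar>/2)"
    by (simp_all add: algebra_simps)
  show "a0 > 0" using pos1 pos2 pos3 f0 f1 f2 f3 by (smt (verit))
  have st: "t \<ge> 0" "s \<ge> 0" using q1 q2 unfolding s_def t_def by auto
  have k2: "\<bar>d*(w*(y+1/2) - u*(x+1/2))\<bar> \<le> \<bar>d\<bar>*(y*(y+1/2) + x*(x+1/2))"
  proof -
    have "\<bar>w*(y+1/2) - u*(x+1/2)\<bar> \<le> \<bar>w\<bar>*(y+1/2) + \<bar>u\<bar>*(x+1/2)"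
      using x y by (simp add: abs_mult order_trans[OF abs_triangle_ineq4])
    also have "\<dots> \<le> y*(y+1/2) + x*(x+1/2)"
      using wb ub x y by (intro add_mono mult_right_mono) auto
    finally show ?thesis by (simp add: abs_mult mult_left_mono)
  qed
  have k3: "\<bar>d\<bar>*(y*(y+1/2) + x*(x+1/2)) \<le> (1/2)*(y*(y+1/2) + x*(x+1/2))"
    using dl x y by (intro mult_right_mono) auto
  have E: "x*y+x*t+y*s \<ge> 0" using x y st by simp
  have "(x+y+1)*a1 - a0 = (x+y+1)*(x+y+1/2)/2 + (x+y+1/2)*(x*y+x*t+y*s) + d/2*(w*(y+1/2) - u*(x+1/2))"
    unfolding a0_def a1_def by (simp add: field_simps)
  moreover have "(x+y+1/2)*(x*y+x*t+y*s) \<ge> 0" using E x y by simp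
  moreover have "(x+y+1)*(x+y+1/2)/2 - (1/4)*(y*(y+1/2) + x*(x+1/2)) > 0"
  proof -
    have A: "(x+y+1)*(x+y+1/2)/2 - (1/4)*(y*(y+1/2) + x*(x+1/2)) = (x*x+y*y)/4 + x*y + (x+y)*5/8 + 1/4"
      by (simp add: field_simps)
    have B: "(x*x+y*y)/4 + x*y + (x+y)*5/8 + 1/4 > 0" using x y by (simp add: add_pos_pos add_nonneg_pos)
    show ?thesis unfolding A using B .
  qed
  ultimately have "(x+y+1)*a1 - a0 > 0"
  proof -
    define K where "K = y*(y+1/2) + x*(x+1/2)"
    define X where "X = w*(y+1/2) - u*(x+1/2)"
    define C where "C = (x+y+1)*(x+y+1/2)/2"
    define P where "P = (x+y+1/2)*(x*y+x*t+y*s)"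
    assume a: "(x+y+1)*a1 - a0 = (x+y+1)*(x+y+1/2)/2 + (x+y+1/2)*(x*y+x*t+y*s) + d/2*(w*(y+1/2) - u*(x+1/2))"
      "(x+y+1/2)*(x*y+x*t+y*s) \<ge> 0" "(x+y+1)*(x+y+1/2)/2 - (1/4)*(y*(y+1/2) + x*(x+1/2)) > 0"
    have h: "(x+y+1)*a1 - a0 = C + P + d/2*X" "P \<ge> 0" "C - (1/4)*K > 0"
      using a unfolding K_def X_def C_def P_def by simp_all
    have "\<bar>d*X\<bar> \<le> 1/2*K" using k2 k3 unfolding K_def X_def by simp
    hence "\<bar>d/2*X\<bar> \<le> (1/4)*K" by (simp add: abs_mult mult.commute mult.left_commute)
    thus ?thesis using h by linarith
  qed
  thus "(x+y+1)*a1 > a0" by simp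
qed

lemma cp_ident:
  fixes RA SA Ra Sa q1 q2 z :: complex
  defines "x \<equiv> RA+SA" and "y \<equiv> Ra+Sa" and "u \<equiv> RA-SA" and "w \<equiv> Ra-Sa"
    and "s \<equiv> (q1+q2)/4" and "t \<equiv> (2-q1-q2)/4" and "d \<equiv> (q1-q2)/2"
  shows "(-1/2 - z) * ((-(RA+SA) - (q1+q2)/4 - z) * (-(Ra+Sa) - ((1-q1)+(1-q2))/4 - z) - (q1+q2)/4 * (((1-q1)+(1-q2))/4))
     - (RA - SA)/2 * ((q1-q2)/2 * (-(Ra+Sa) - ((1-q1)+(1-q2))/4 - z) - (q1+q2)/4 * (((1-q2)-(1-q1))/2))
     + (-(Ra - Sa)/2) * ((q1-q2)/2 * (((1-q1)+(1-q2))/4) - (-(RA+SA) - (q1+q2)/4 - z) * (((1-q2)-(1-q1))/2))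
   = - (z^3 + (x+y+1) * z^2 + ((x+y+1/2)/2 + x*y+x*t+y*s + d/2*(w-u)) * z
        + ((x*y+x*t+y*s)/2 + d/2*(w*(x+1/2) - u*(y+1/2))))"
  unfolding x_def y_def u_def w_def s_def t_def d_def
  by (simp add: field_simps power2_eq_square power3_eq_cube)

lemma det_cm:
  fixes A :: "real mat"
  assumes A: "A \<in> carrier_mat 3 3"
  shows "det (char_matrix (map_mat complex_of_real A) z)
   = (of_real (A$$(0,0)) - z)*((of_real (A$$(1,1)) - z)*(of_real (A$$(2,2)) - z) - of_real (A$$(1,2))*of_real (A$$(2,1)))
     - of_real (A$$(0,1))*(of_real (A$$(1,0))*(of_real (A$$(2,2)) - z) - of_real (A$$(1,2))*of_real (A$$(2,0)))
     + of_real (A$$(0,2))*(of_real (A$$(1,0))*of_real (A$$(2,1)) - (of_real (A$$(1,1)) - z)*of_real (A$$(2,0)))"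
proof -
  have cc: "char_matrix (map_mat complex_of_real A) z \<in> carrier_mat 3 3"
    using A by (intro char_matrix_closed) simp
  have ent: "char_matrix (map_mat complex_of_real A) z $$ (i,j) = of_real (A$$(i,j)) - (if i = j then z else 0)"
    if "i < 3" "j < 3" for i j
    using that A unfolding char_matrix_def by auto
  show ?thesis unfolding det3[OF cc] by (simp add: ent)
qed

theorem mainTheorem6:
  fixes m1 m2 \<alpha> N1a N1A N2a N2A :: real and z :: complex
  assumes "m1 > 0" and "m2 > 0" and "\<alpha> > 0"
    and "N1a > 0" and "N1A > 0" and "N2a > 0" and "N2A > 0"
    and "eigenvalue (map_mat complex_of_real (JSL m1 m2 \<alpha> N1a N1A N2a N2A)) z"
  shows "Re z < 0"
proof -
  define q1 where "q1 = N1a / (N1A + N1a)"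
  define q2 where "q2 = N2a / (N2A + N2a)"
  define RA where "RA = \<alpha> * m2 * N2A / N1A"
  define SA where "SA = m1 * N1A / (\<alpha> * N2A)"
  define Ra where "Ra = \<alpha> * m2 * N2a / N1a"
  define Sa where "Sa = m1 * N1a / (\<alpha> * N2a)"
  have p1: "N1A / (N1A + N1a) = 1 - q1" unfolding q1_def using assms by (simp add: field_simps)
  have p2: "N2A / (N2A + N2a) = 1 - q2" unfolding q2_def using assms by (simp add: field_simps)
  define L where "L = [[-1/2, (RA - SA)/2, -(Ra - Sa)/2],
        [(q1 - q2)/2, -(RA + SA) - (q1 + q2)/4, (q1 + q2)/4],
        [((1-q2) - (1-q1))/2, ((1-q1) + (1-q2))/4, -(Ra + Sa) - ((1-q1) + (1-q2))/4]]"
  have J: "JSL m1 m2 \<alpha> N1a N1A N2a N2A = mat_of_rows_list 3 L"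
    unfolding JSL_def Let_def p1 p2 q1_def[symmetric] q2_def[symmetric] RA_def SA_def Ra_def Sa_def L_def ..
  define A where "A = JSL m1 m2 \<alpha> N1a N1A N2a N2A"
  have lL: "length L = 3" unfolding L_def by simp
  have Ac: "A \<in> carrier_mat 3 3" unfolding A_def J mat_of_rows_list_def lL[symmetric] by (rule mat_carrier)
  have Ae: "A $$ (i,j) = L!i!j" if "i < 3" "j < 3" for i j
    using that unfolding A_def J mat_of_rows_list_def lL by simp
  have "det (char_matrix (map_mat complex_of_real A) z) = 0"
    using eigenvalue_det[of "map_mat complex_of_real A" 3] Ac assms(8) unfolding A_def by simp
  hence "0 = (-1/2 - z) * ((-(of_real RA+of_real SA) - (of_real q1+of_real q2)/4 - z) * (-(of_real Ra+of_real Sa) - ((1-of_real q1)+(1-of_real q2))/4 - z) - (of_real q1+of_real q2)/4 * (((1-of_real q1)+(1-of_real q2))/4))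
     - (of_real RA - of_real SA)/2 * ((of_real q1-of_real q2)/2 * (-(of_real Ra+of_real Sa) - ((1-of_real q1)+(1-of_real q2))/4 - z) - (of_real q1+of_real q2)/4 * (((1-of_real q2)-(1-of_real q1))/2))
     + (-(of_real Ra - of_real Sa)/2) * ((of_real q1-of_real q2)/2 * (((1-of_real q1)+(1-of_real q2))/4) - (-(of_real RA+of_real SA) - (of_real q1+of_real q2)/4 - z) * (((1-of_real q2)-(1-of_real q1))/2))"
    unfolding det_cm[OF Ac] by (simp add: Ae L_def)
  also have "\<dots> = - (z^3 + (of_real RA + of_real SA + (of_real Ra + of_real Sa) + 1) * z^2
      + (((of_real RA + of_real SA) + (of_real Ra + of_real Sa) + 1/2)/2 + (of_real RA + of_real SA)*(of_real Ra + of_real Sa)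
         + (of_real RA + of_real SA)*((2-of_real q1-of_real q2)/4) + (of_real Ra + of_real Sa)*((of_real q1+of_real q2)/4)
         + ((of_real q1-of_real q2)/2)/2*((of_real Ra-of_real Sa)-(of_real RA-of_real SA))) * z
      + (((of_real RA + of_real SA)*(of_real Ra + of_real Sa) + (of_real RA + of_real SA)*((2-of_real q1-of_real q2)/4) + (of_real Ra + of_real Sa)*((of_real q1+of_real q2)/4))/2
         + ((of_real q1-of_real q2)/2)/2*((of_real Ra-of_real Sa)*((of_real RA + of_real SA)+1/2) - (of_real RA-of_real SA)*((of_real Ra + of_real Sa)+1/2))))"
    by (rule cp_ident)
  finally have eq0: "\<dots> = 0" by simp
  define x where "x = RA + SA"
  define y where "y = Ra + Sa"
  define u where "u = RA - SA"
  define w where "w = Ra - Sa"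
  define s where "s = (q1+q2)/4"
  define t where "t = (2-q1-q2)/4"
  define d where "d = (q1-q2)/2"
  define a0 where "a0 = (x*y+x*t+y*s)/2 + d/2*(w*(x+1/2) - u*(y+1/2))"
  define a1 where "a1 = (x+y+1/2)/2 + x*y+x*t+y*s + d/2*(w-u)"
  have eq: "z^3 + of_real (x+y+1) * z^2 + of_real a1 * z + of_real a0 = 0"
    using eq0 unfolding a0_def a1_def x_def y_def u_def w_def s_def t_def d_def
    by (simp only: of_real_add of_real_mult of_real_diff of_real_divide of_real_1 of_real_numeral of_real_minus neg_equal_0_iff_equal)
  have pos: "RA > 0" "SA > 0" "Ra > 0" "Sa > 0" unfolding RA_def SA_def Ra_def Sa_def using assms by auto
  have q: "0 < q1" "q1 < 1" "0 < q2" "q2 < 1" unfolding q1_def q2_def using assms by (auto simp: field_simps)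
  have hx: "x > 0" "y > 0" "u < x" "-x < u" "w < y" "-y < w" unfolding x_def y_def u_def w_def using pos by auto
  note H = hurwitz_ineqs[OF hx q]
  have "a0 > 0" using H(1) unfolding a0_def s_def t_def d_def .
  moreover have "(x+y+1)*a1 > a0" using H(2) unfolding a0_def a1_def s_def t_def d_def .
  moreover have "x+y+1 > 0" using hx by simp
  ultimately show ?thesis using cubic_hurwitz[OF eq] by blast
qed
end
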